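(* Let $0<\alpha<1$ and let $\bar M^\alpha(t)=\bar M(D_\alpha(t))$ be the multivariate generalized space fractional counting process (MGSFCP). Its state probabilities $p^\alpha(\bar n,t)=\Pr\{\bar M^\alpha(t)=\bar n\}$, $\bar n\in\mathbb{N}_0^q$, satisfy $$\frac{\mathrm{d}}{\mathrm{d}t}p^\alpha(\bar n,t)=-\sum_{\bar m\in\mathbb{N}_0^q}\ \sum_{\substack{\Omega(k_i,m_i)\\ i=1,\dots,q}}\frac{\lambda^\alpha\Gamma(\alpha+1)\,p^\alpha(\bar n-\bar m,t)}{\Gamma\big(\alpha-\sum_{i=1}^q\sum_{j=1}^{k_i}x_{ij}+1\big)}\prod_{i=1}^q\prod_{j=1}^{k_i}\frac{(-\lambda_{ij}/\lambda)^{x_{ij}}}{x_{ij}!}$$ with initial condition $p^\alpha(\bar n,0)=\mathbb{I}_{\{\bar n=\bar 0\}}$.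
   Context: Fix $q\ge1$, integers $k_1,\dots,k_q\ge1$, $\lambda_{ij}>0$ ($1\le i\le q$, $1\le j\le k_i$), $\lambda=\sum_{i,j}\lambda_{ij}$. The MGCP $\bar M(t)=(M_1(t),\dots,M_q(t))$ is the $\mathbb{N}_0^q$-valued process with $\bar M(0)=\bar0$, independent stationary increments and transition probabilities $\Pr\{\bar M(t+h)=\bar n+\bar j\mid\bar M(t)=\bar n\}=\lambda_{ij}h+o(h)$ if $\bar j$ has $i$th entry $j\in\{1,\dots,k_i\}$ and other entries $0$, $1-\lambda h+o(h)$ if $\bar j=\bar0$, $o(h)$ otherwise (equivalently, independent components with joint pgf $\exp(-t\sum_{i,j}\lambda_{ij}(1-u_i^j))$). $\{D_\alpha(t)\}$ is an $\alpha$-stable subordinator ($\mathbb{E}e^{-sD_\alpha(t)}=e^{-ts^\alpha}$) independent of $\bar M$. $\Omega(k_i,m_i)=\{(x_{i1},\dots,x_{ik_i})\in\mathbb{N}_0^{k_i}:\sum_{j=1}^{k_i}jx_{ij}=m_i\}$, and the sum over "$\Omega(k_i,m_i)$, $i=1,\dots,q$" runs over all families $(x_{ij})$ with $(x_{i1},\dots,x_{ik_i})\in\Omega(k_i,m_i)$ for every $i$. Conventions: $p^\alpha(\bar n-\bar m,t)=0$ if some component of $\bar n-\bar m$ is negative; $1/\Gamma(z)=0$ for $z\in\{0,-1,-2,\dots\}$. *)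

theory Defs
  imports "HOL-Analysis.Analysis" "HOL-Probability.Probability"
begin

definition poisson0 :: "real \<Rightarrow> nat pmf" where
  "poisson0 r = (if 0 < r then poisson_pmf r else return_pmf 0)"

text \<open>Law at time s of the generalized counting process with k jumps of sizes 1..K,
  rates l 1, ..., l K:  M(s) = sum_j j * N_j(s), N_j independent Poisson(l j * s).\<close>
definition GCP_pmf :: "nat \<Rightarrow> (nat \<Rightarrow> real) \<Rightarrow> real \<Rightarrow> nat pmf" where
  "GCP_pmf K l s = map_pmf (\<lambda>N. \<Sum>j\<in>{1..K}. j * N j)
                     (Pi_pmf {1..K} 0 (\<lambda>j. poisson0 (l j * s)))"

text \<open>Law at time s of the MGCP (independent components i = 1..q);
  vectors in N_0^q are functions nat => nat vanishing outside {1..q}.\<close>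
definition MGCP_pmf :: "nat \<Rightarrow> (nat \<Rightarrow> nat) \<Rightarrow> (nat \<Rightarrow> nat \<Rightarrow> real) \<Rightarrow> real \<Rightarrow> (nat \<Rightarrow> nat) pmf" where
  "MGCP_pmf q k lam s = Pi_pmf {1..q} 0 (\<lambda>i. GCP_pmf (k i) (lam i) s)"

text \<open>State probabilities of the MGSFCP M(D_alpha(t)), where mu t is the law of D_alpha(t)
  (independent of M): p^alpha(n,t) = E[ Pr{M(s) = n} at s = D_alpha(t) ].\<close>
definition MGSFCP_prob ::
  "nat \<Rightarrow> (nat \<Rightarrow> nat) \<Rightarrow> (nat \<Rightarrow> nat \<Rightarrow> real) \<Rightarrow> (real \<Rightarrow> real measure) \<Rightarrow> (nat \<Rightarrow> nat) \<Rightarrow> real \<Rightarrow> real" where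
  "MGSFCP_prob q k lam mu n t = (\<integral>s. pmf (MGCP_pmf q k lam s) n \<partial>(mu t))"

definition MGSFCP_prob_diff ::
  "nat \<Rightarrow> (nat \<Rightarrow> nat) \<Rightarrow> (nat \<Rightarrow> nat \<Rightarrow> real) \<Rightarrow> (real \<Rightarrow> real measure) \<Rightarrow> (nat \<Rightarrow> nat) \<Rightarrow> (nat \<Rightarrow> nat) \<Rightarrow> real \<Rightarrow> real" where
  "MGSFCP_prob_diff q k lam mu n m t =
     (if \<exists>i\<in>{1..q}. n i < m i then 0 else MGSFCP_prob q k lam mu (\<lambda>i. n i - m i) t)"

definition Omega :: "nat \<Rightarrow> nat \<Rightarrow> (nat \<Rightarrow> nat) set" where
  "Omega K m = {x \<in> PiE {1..K} (\<lambda>_. UNIV). (\<Sum>j\<in>{1..K}. j * x j) = m}"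

definition NQ :: "nat \<Rightarrow> (nat \<Rightarrow> nat) set" where
  "NQ q = {m. \<forall>i. i \<notin> {1..q} \<longrightarrow> m i = 0}"

end

theory Submission
  imports Defs "HOL-Computational_Algebra.Formal_Power_Series"
begin

definition ff :: "real \<Rightarrow> nat \<Rightarrow> real" where
  "ff x r = (\<Prod>i = 0..<r. x - of_nat i)"

lemma ff_0[simp]: "ff x 0 = 1" by (simp add: ff_def)
lemma ff_Suc: "ff x (Suc r) = ff x r * (x - of_nat r)" by (simp add: ff_def)
lemma ff_gchoose: "ff x r = fact r * (x gchoose r)" by (simp add: ff_def gbinomial_mult_fact)

lemma ff_vandermonde: "ff (x + y) r = (\<Sum>b\<le>r. of_nat (r choose b) * ff x b * ff y (r - b))"
proof -
  have "ff (x + y) r = fact r * (\<Sum>b\<le>r. (x gchoose b) * (y gchoose (r - b)))"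
    using gbinomial_Vandermonde[of x y r] by (simp add: ff_gchoose atLeast0AtMost)
  also have "\<dots> = (\<Sum>b\<le>r. of_nat (r choose b) * ff x b * ff y (r - b))"
    unfolding sum_distrib_left
  proof (rule sum.cong)
    fix b assume "b \<in> {..r}"
    then have br: "b \<le> r" by simp
    show "fact r * ((x gchoose b) * (y gchoose (r - b))) = of_nat (r choose b) * ff x b * ff y (r - b)"
      by (simp add: ff_gchoose binomial_fact[OF br] field_simps)
  qed simp
  finally show ?thesis .
qed

lemma ff_zero: "ff 0 r = (if r = 0 then 1 else 0)"
  by (induction r) (auto simp: ff_Suc)

definition cc :: "real \<Rightarrow> nat \<Rightarrow> nat \<Rightarrow> real" where
  "cc a r k = (\<Sum>K\<le>k. (-1)^K * of_nat (k choose K) * ff (of_nat K * a) r) / fact k"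

lemma cc_0: "cc a 0 k = (if k = 0 then 1 else 0)"
proof -
  have "(\<Sum>K\<le>k. (-1::real)^K * of_nat (k choose K)) = (if k = 0 then 1 else 0)"
    using choose_alternating_sum[of k, where 'a=real] by (cases "k = 0") (auto simp: mult.commute)
  then show ?thesis by (simp add: cc_def)
qed

lemma cc_r_0: "cc a r 0 = (if r = 0 then 1 else 0)"
  by (simp add: cc_def ff_zero)

lemma cc_Suc_0: "cc a (Suc r) 0 = - of_nat r * cc a r 0"
  by (simp add: cc_r_0)

lemma cc_Suc_Suc: "cc a (Suc r) (Suc k) = (of_nat (Suc k) * a - of_nat r) * cc a r (Suc k) - a * cc a r k"
proof -
  define S where "S = (\<lambda>K. (-1::real)^K * ff (of_nat K * a) r)"
  have e1: "cc a (Suc r) (Suc k) - (of_nat (Suc k) * a - of_nat r) * cc a r (Suc k)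
      = (\<Sum>K\<le>Suc k. S K * of_nat (Suc k choose K) * ((of_nat K - of_nat (Suc k)) * a)) / fact (Suc k)"
    unfolding cc_def S_def ff_Suc
    by (simp add: sum_distrib_left sum_divide_distrib diff_divide_distrib[symmetric]
          sum_subtractf[symmetric] algebra_simps)
  have e2: "S K * of_nat (Suc k choose K) * ((of_nat K - of_nat (Suc k)) * a)
      = - (a * of_nat (Suc k) * (S K * of_nat (k choose K)))" for K
  proof (cases "K \<le> k")
    case True
    have "of_nat (Suc k choose K) * (of_nat (Suc k) - of_nat K :: real) = of_nat (Suc k) * of_nat (k choose K)"
    proof -
      have "(Suc k choose K) * (Suc k - K) = Suc k * (k choose K)"
        using binomial_absorb_comp[of "Suc k" K] True
        by (metis Suc_diff_le binomial_absorb_comp diff_Suc_1 mult.commute)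
      then have h: "real (Suc k choose K) * real (Suc k - K) = real (Suc k) * real (k choose K)"
        by (metis of_nat_mult)
      have "real (Suc k - K) = real (Suc k) - real K" using True by (simp add: of_nat_diff)
      then show ?thesis using h by simp
    qed
    note h2 = this
    have "S K * of_nat (Suc k choose K) * ((of_nat K - of_nat (Suc k)) * a)
       = - (a * S K * (of_nat (Suc k choose K) * (of_nat (Suc k) - of_nat K)))"
      by (simp add: algebra_simps)
    also have "\<dots> = - (a * S K * (of_nat (Suc k) * of_nat (k choose K)))" by (simp only: h2)
    finally show ?thesis by (simp add: algebra_simps)
  next
    case False
    then have "K = Suc k \<or> K > Suc k" by auto
    then show ?thesis using False by (auto simp: binomial_eq_0)
  qed
  have "cc a (Suc r) (Suc k) - (of_nat (Suc k) * a - of_nat r) * cc a r (Suc k)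
       = - (a * of_nat (Suc k) * (\<Sum>K\<le>Suc k. S K * of_nat (k choose K))) / fact (Suc k)"
    by (simp only: e1 e2 sum_negf sum_distrib_left)
  also have "(\<Sum>K\<le>Suc k. S K * of_nat (k choose K)) = (\<Sum>K\<le>k. S K * of_nat (k choose K))"
    by simp
  also have "- (a * of_nat (Suc k) * (\<Sum>K\<le>k. S K * of_nat (k choose K))) / fact (Suc k) = - a * cc a r k"
  proof -
    have g: "- (a * of_nat (Suc k) * X) / fact (Suc k) = - a * (X / fact k)" for X :: real
    proof -
      have "fact (Suc k) = (of_nat (Suc k) :: real) * fact k" by simp
      moreover have "(fact k :: real) \<noteq> 0" by simp
      ultimately show ?thesis by (simp add: field_simps del: of_nat_Suc)
    qed
    show ?thesis unfolding g unfolding cc_def S_def by (simp add: mult.commute mult.left_commute)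
  qed
  finally show ?thesis by simp
qed

lemma cc_vanish: "r < k \<Longrightarrow> cc a r k = 0"
proof (induction r arbitrary: k)
  case 0 then show ?case by (simp add: cc_0)
next
  case (Suc r)
  then obtain k' where k: "k = Suc k'" by (cases k) auto
  then show ?case using Suc by (simp add: cc_Suc_Suc)
qed

lemma cc_sum_all: "(\<Sum>b\<le>r. of_nat (r choose b) * ff a b * cc a (r - b) k)
   = (\<Sum>K\<le>k. (-1)^K * of_nat (k choose K) * ff (of_nat (Suc K) * a) r) / fact k"
proof -
  have "(\<Sum>b\<le>r. of_nat (r choose b) * ff a b * cc a (r - b) k)
     = (\<Sum>b\<le>r. \<Sum>K\<le>k. of_nat (r choose b) * ff a b * ((-1)^K * of_nat (k choose K) * ff (of_nat K * a) (r - b)) / fact k)"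
    unfolding cc_def by (simp add: sum_distrib_left sum_divide_distrib)
  also have "\<dots> = (\<Sum>K\<le>k. \<Sum>b\<le>r. of_nat (r choose b) * ff a b * ((-1)^K * of_nat (k choose K) * ff (of_nat K * a) (r - b)) / fact k)"
    by (rule sum.swap)
  also have "\<dots> = (\<Sum>K\<le>k. (-1)^K * of_nat (k choose K) * ff (of_nat (Suc K) * a) r / fact k)"
  proof (rule sum.cong)
    fix K
    have "ff (of_nat (Suc K) * a) r = ff (a + of_nat K * a) r" by (simp add: algebra_simps)
    also have "\<dots> = (\<Sum>b\<le>r. of_nat (r choose b) * ff a b * ff (of_nat K * a) (r - b))"
      by (rule ff_vandermonde)
    finally show "(\<Sum>b\<le>r. of_nat (r choose b) * ff a b * ((-1)^K * of_nat (k choose K) * ff (of_nat K * a) (r - b)) / fact k)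
      = (-1)^K * of_nat (k choose K) * ff (of_nat (Suc K) * a) r / fact k"
      by (simp add: sum_distrib_left sum_divide_distrib algebra_simps)
  qed simp
  finally show ?thesis by (simp add: sum_divide_distrib)
qed

lemma cc_tderiv: "of_nat (Suc k) * cc a r (Suc k) = - (\<Sum>b\<in>{1..r}. of_nat (r choose b) * ff a b * cc a (r - b) k)"
proof -
  define f where "f = (\<lambda>K::nat. ff (of_nat K * a) r)"
  have split: "(\<Sum>b\<le>r. of_nat (r choose b) * ff a b * cc a (r - b) k)
      = cc a r k + (\<Sum>b\<in>{1..r}. of_nat (r choose b) * ff a b * cc a (r - b) k)"
  proof -
    have "{..r} = insert 0 {1..r}" by auto
    then show ?thesis by simp
  qed
  have A: "(\<Sum>K\<le>Suc k. (-1)^K * of_nat (Suc k choose K) * f K)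
     = (\<Sum>K\<le>k. (-1)^K * of_nat (k choose K) * f K) - (\<Sum>K\<le>k. (-1)^K * of_nat (k choose K) * f (Suc K))"
  proof -
    have "(\<Sum>K\<le>Suc k. (-1)^K * of_nat (Suc k choose K) * f K)
        = f 0 + (\<Sum>K\<le>k. (-1)^(Suc K) * of_nat (Suc k choose Suc K) * f (Suc K))"
      by (subst sum.atMost_Suc_shift) simp
    also have "\<dots> = f 0 + (\<Sum>K\<le>k. (-1)^(Suc K) * of_nat (k choose Suc K) * f (Suc K))
                 - (\<Sum>K\<le>k. (-1)^K * of_nat (k choose K) * f (Suc K))"
      by (simp add: sum_subtractf[symmetric] sum.distrib[symmetric] algebra_simps)
    also have "f 0 + (\<Sum>K\<le>k. (-1)^(Suc K) * of_nat (k choose Suc K) * f (Suc K))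
        = (\<Sum>K\<le>Suc k. (-1)^K * of_nat (k choose K) * f K)"
      unfolding sum.atMost_Suc_shift[of _ k] by simp
    also have "\<dots> = (\<Sum>K\<le>k. (-1)^K * of_nat (k choose K) * f K)" by simp
    finally show ?thesis .
  qed
  have "of_nat (Suc k) * cc a r (Suc k) = (\<Sum>K\<le>Suc k. (-1)^K * of_nat (Suc k choose K) * f K) / fact k"
  proof -
    have "fact (Suc k) = (of_nat (Suc k) :: real) * fact k" by simp
    moreover have "(fact k :: real) \<noteq> 0" by simp
    ultimately show ?thesis unfolding cc_def f_def by (simp add: field_simps del: of_nat_Suc)
  qed
  also have "\<dots> = cc a r k - (\<Sum>b\<le>r. of_nat (r choose b) * ff a b * cc a (r - b) k)"
    unfolding A cc_sum_all by (simp add: cc_def f_def diff_divide_distrib)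
  finally show ?thesis unfolding split by simp
qed

lemma exp_diff_bound: "\<bar>exp a - exp b\<bar> \<le> \<bar>a - b\<bar> * exp (max a b)" for a b :: real
proof -
  have *: "exp y - exp x \<le> (y - x) * exp y" if "x \<le> y" for x y :: real
  proof -
    have "1 + (x - y) \<le> exp (x - y)" by (rule exp_ge_add_one_self)
    then have "exp y * (1 + (x - y)) \<le> exp y * exp (x - y)" by (intro mult_left_mono) auto
    then show ?thesis by (simp add: exp_diff algebra_simps)
  qed
  show ?thesis
  proof (cases "a \<le> b")
    case True
    then show ?thesis using *[OF True] by (simp add: abs_if max_def)
  next
    case False
    then show ?thesis using *[of b a] by (simp add: abs_if max_def)
  qed
qed

lemma pow_exp_bound:
  fixes x c :: real assumes "0 \<le> x" "0 < c"
  shows "x ^ m * exp (- c * x) \<le> fact m / c ^ m"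
proof -
  have "(c * x) ^ m / fact m \<le> (\<Sum>n\<le>m. (c * x) ^ n / fact n)"
    by (rule member_le_sum) (use assms in auto)
  also have "\<dots> \<le> exp (c * x)"
    using assms summable_exp_generic[of "c * x"]
    by (auto simp: exp_def divide_inverse ac_simps intro!: sum_le_suminf)
  finally have h: "(c * x) ^ m / fact m \<le> exp (c * x)" .
  have "x ^ m * exp (- c * x) = ((c * x) ^ m / fact m) * exp (- (c * x)) * (fact m / c ^ m)"
    using assms by (simp add: power_mult_distrib field_simps)
  also have "\<dots> \<le> exp (c * x) * exp (- (c * x)) * (fact m / c ^ m)"
    using h assms by (intro mult_right_mono) auto
  also have "\<dots> = fact m / c ^ m" by (simp add: exp_minus field_simps)
  finally show ?thesis .
qed

locale lapl =
  fixes M :: "real measure"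
  assumes prob: "prob_space M" and sets: "sets M = sets borel" and nonneg: "AE x in M. 0 \<le> x"
begin

lemma meas: assumes "f \<in> borel_measurable borel" shows "f \<in> borel_measurable M"
  using assms measurable_cong_sets[OF sets refl, of borel] by blast

lemma integrable_pe: assumes "0 < c" shows "integrable M (\<lambda>x. x ^ m * exp (- c * x))"
proof -
  interpret prob_space M by (rule prob)
  show ?thesis
  proof (rule integrable_const_bound[where B="fact m / c ^ m"])
    show "AE x in M. norm (x ^ m * exp (- c * x)) \<le> fact m / c ^ m"
      using nonneg by eventually_elim (use pow_exp_bound[OF _ assms] in auto)
    show "(\<lambda>x. x ^ m * exp (- c * x)) \<in> borel_measurable M"
      by (rule meas) measurable
  qed
qed

lemma laplace_deriv:
  assumes u: "0 < u"
  shows "((\<lambda>v. \<integral>x. x ^ r * exp (- v * x) \<partial>M) has_real_derivative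
            (- (\<integral>x. x ^ Suc r * exp (- u * x) \<partial>M))) (at u)"
proof -
  define F where "F = (\<lambda>v. \<integral>x. x ^ r * exp (- v * x) \<partial>M)"
  define D where "D = (- (\<integral>x. x ^ Suc r * exp (- u * x) \<partial>M))"
  define S where "S = {- (u/2) <..< u/2}"
  have S: "open S" "0 \<in> S" using u by (auto simp: S_def)
  have "((\<lambda>h. (F (u + h) - F u) / h) \<longlongrightarrow> D) (at 0 within S)"
  proof (subst tendsto_at_iff_sequentially, intro allI impI)
    fix X :: "nat \<Rightarrow> real" assume X: "\<forall>i. X i \<in> S - {0}" and X0: "X \<longlonglongrightarrow> 0"
    define q where "q = (\<lambda>i x. x ^ r * (exp (- (u + X i) * x) - exp (- u * x)) / X i)"
    have int_q: "integrable M (q i)" for i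
    proof -
      have "0 < u + X i" using spec[OF X, of i] u by (auto simp: S_def)
      then show ?thesis unfolding q_def
        using integrable_pe[of "u + X i" r] integrable_pe[OF u, of r]
        by (simp add: right_diff_distrib)
    qed
    have Fq: "(F (u + X i) - F u) / X i = integral\<^sup>L M (q i)" for i
    proof -
      have "0 < u + X i" using spec[OF X, of i] u by (auto simp: S_def)
      then have "F (u + X i) - F u = (\<integral>x. x ^ r * exp (- (u + X i) * x) - x ^ r * exp (- u * x) \<partial>M)"
        unfolding F_def using integrable_pe[of "u + X i" r] integrable_pe[OF u, of r]
        by (subst Bochner_Integration.integral_diff) auto
      then show ?thesis unfolding q_def by (simp add: right_diff_distrib)
    qed
    have "(\<lambda>i. integral\<^sup>L M (q i)) \<longlonglongrightarrow> (\<integral>x. - (x ^ Suc r * exp (- u * x)) \<partial>M)"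
    proof (rule integral_dominated_convergence[where w="\<lambda>x. x ^ Suc r * exp (- (u/2) * x)"])
      show "(\<lambda>x. - (x ^ Suc r * exp (- u * x))) \<in> borel_measurable M" by (rule meas) measurable
      show "q i \<in> borel_measurable M" for i using int_q by auto
      show "integrable M (\<lambda>x. x ^ Suc r * exp (- (u/2) * x))" using integrable_pe[of "u/2" "Suc r"] u by simp
      show "AE x in M. (\<lambda>i. q i x) \<longlonglongrightarrow> - (x ^ Suc r * exp (- u * x))"
      proof (rule AE_I2)
        fix x :: real
        have "((\<lambda>v. x ^ r * exp (- v * x)) has_real_derivative x ^ r * (exp (- u * x) * (- x))) (at u)"
          by (auto intro!: derivative_eq_intros)
        then have "((\<lambda>h. (x ^ r * exp (- (u + h) * x) - x ^ r * exp (- u * x)) / h) \<longlongrightarrow>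
              x ^ r * (exp (- u * x) * (- x))) (at 0)"
          unfolding DERIV_def by simp
        then have "((\<lambda>h. (x ^ r * exp (- (u + h) * x) - x ^ r * exp (- u * x)) / h) \<circ> X) \<longlonglongrightarrow>
              x ^ r * (exp (- u * x) * (- x))"
          using X X0 by (subst (asm) tendsto_at_iff_sequentially) auto
        then show "(\<lambda>i. q i x) \<longlonglongrightarrow> - (x ^ Suc r * exp (- u * x))"
          unfolding q_def comp_def by (simp add: right_diff_distrib algebra_simps)
      qed
      show "AE x in M. norm (q i x) \<le> x ^ Suc r * exp (- (u/2) * x)" for i
        using nonneg
      proof eventually_elim
        case (elim x)
        have h: "X i \<noteq> 0" "\<bar>X i\<bar> < u/2" using spec[OF X, of i] by (auto simp: S_def)
        have "\<bar>exp (- (u + X i) * x) - exp (- u * x)\<bar> \<le> \<bar>- (u + X i) * x - - u * x\<bar> * exp (max (- (u + X i) * x) (- u * x))"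
          by (rule exp_diff_bound)
        also have "\<dots> \<le> (\<bar>X i\<bar> * x) * exp (- (u/2) * x)"
        proof (rule mult_mono)
          show "\<bar>- (u + X i) * x - - u * x\<bar> \<le> \<bar>X i\<bar> * x" using elim by (simp add: abs_mult algebra_simps)
          have "max (- (u + X i) * x) (- u * x) \<le> - (u/2) * x"
          proof -
            have a1: "\<bar>X i\<bar> * x \<le> (u/2) * x" using h elim by (intro mult_right_mono) auto
            have a2: "- X i * x \<le> \<bar>X i\<bar> * x" using elim by (intro mult_right_mono) auto
            have a3: "0 \<le> u * x" using elim u by simp
            show ?thesis using a1 a2 a3 by (simp add: max_def algebra_simps)
          qed
          then show "exp (max (- (u + X i) * x) (- u * x)) \<le> exp (- (u/2) * x)" by simp
        qed (use elim in auto)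
        finally have b: "\<bar>exp (- (u + X i) * x) - exp (- u * x)\<bar> \<le> \<bar>X i\<bar> * x * exp (- (u/2) * x)" .
        have "norm (q i x) = x ^ r * \<bar>exp (- (u + X i) * x) - exp (- u * x)\<bar> / \<bar>X i\<bar>"
          unfolding q_def using elim by (simp add: abs_mult)
        also have "\<dots> \<le> x ^ r * (\<bar>X i\<bar> * x * exp (- (u/2) * x)) / \<bar>X i\<bar>"
          using b elim by (intro divide_right_mono mult_left_mono) auto
        also have "\<dots> = x ^ Suc r * exp (- (u/2) * x)" using h by simp
        finally show ?case .
      qed
    qed
    then show "((\<lambda>h. (F (u + h) - F u) / h) \<circ> X) \<longlonglongrightarrow> D"
      unfolding comp_def Fq D_def by simp
  qed
  then have "((\<lambda>h. (F (u + h) - F u) / h) \<longlongrightarrow> D) (at 0)"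
    using at_within_open[OF S(2,1)] by simp
  then show ?thesis unfolding DERIV_def F_def D_def .
qed

end

definition AA :: "real \<Rightarrow> real \<Rightarrow> nat \<Rightarrow> real \<Rightarrow> real" where
  "AA a t r u = (\<Sum>k\<le>r. cc a r k * t ^ k * u powr (of_nat k * a - of_nat r))"

definition phi :: "real \<Rightarrow> real \<Rightarrow> real \<Rightarrow> real" where
  "phi a t u = exp (- t * u powr a)"

lemma sum_shift_vanish:
  fixes g :: "nat \<Rightarrow> real"
  assumes "g (Suc r) = 0"
  shows "(\<Sum>k\<le>r. g k) = g 0 + (\<Sum>k\<le>r. g (Suc k))"
proof -
  have "(\<Sum>k\<le>Suc r. g k) = g 0 + (\<Sum>k\<le>r. g (Suc k))" by (rule sum.atMost_Suc_shift)
  then show ?thesis using assms by simp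
qed

lemma AA_deriv:
  assumes u: "0 < u"
  shows "((\<lambda>u. phi a t u * AA a t r u) has_real_derivative phi a t u * AA a t (Suc r) u) (at u)"
proof -
  have dA: "((\<lambda>u. AA a t r u) has_real_derivative
      (\<Sum>k\<le>r. cc a r k * t ^ k * ((of_nat k * a - of_nat r) * u powr (of_nat k * a - of_nat r - 1)))) (at u)"
    unfolding AA_def by (intro DERIV_sum DERIV_cmult has_real_derivative_powr u)
  have dphi: "((\<lambda>u. phi a t u) has_real_derivative phi a t u * (- t * (a * u powr (a - 1)))) (at u)"
    unfolding phi_def using u by (auto intro!: derivative_eq_intros)
  have D: "((\<lambda>u. phi a t u * AA a t r u) has_real_derivative
     phi a t u * (- t * (a * u powr (a - 1))) * AA a t r u +
     (\<Sum>k\<le>r. cc a r k * t ^ k * ((of_nat k * a - of_nat r) * u powr (of_nat k * a - of_nat r - 1))) * phi a t u) (at u)"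
    by (rule DERIV_mult[OF dphi dA])
  define g where "g = (\<lambda>k. cc a r k * t ^ k * ((of_nat k * a - of_nat r) * u powr (of_nat k * a - of_nat r - 1)))"
  define p where "p = (\<lambda>k::nat. u powr (of_nat k * a - of_nat r - 1))"
  have s1: "(\<Sum>k\<le>r. g k) = g 0 + (\<Sum>k\<le>r. g (Suc k))"
    by (rule sum_shift_vanish) (simp add: g_def cc_vanish)
  have s2: "- t * (a * u powr (a - 1)) * AA a t r u = (\<Sum>k\<le>r. - a * cc a r k * t ^ Suc k * p (Suc k))"
    unfolding AA_def sum_distrib_left
  proof (rule sum.cong)
    fix k
    have "u powr (a - 1) * u powr (of_nat k * a - of_nat r) = p (Suc k)"
      unfolding p_def powr_add[symmetric] by (simp add: algebra_simps)
    then show "- t * (a * u powr (a - 1)) * (cc a r k * t ^ k * u powr (of_nat k * a - of_nat r)) =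
         - a * cc a r k * t ^ Suc k * p (Suc k)"
      by (simp add: algebra_simps)
  qed simp
  have s3: "AA a t (Suc r) u = cc a (Suc r) 0 * p 0 + (\<Sum>k\<le>r. cc a (Suc r) (Suc k) * t ^ Suc k * p (Suc k))"
  proof -
    have e: "- 1 - real r = - real r - 1" by simp
    show ?thesis unfolding AA_def p_def by (subst sum.atMost_Suc_shift) (simp add: algebra_simps e)
  qed
  have "phi a t u * (- t * (a * u powr (a - 1))) * AA a t r u + (\<Sum>k\<le>r. g k) * phi a t u
      = phi a t u * ((- t * (a * u powr (a - 1)) * AA a t r u) + (\<Sum>k\<le>r. g k))"
    by (simp add: algebra_simps)
  also have "\<dots> = phi a t u * (g 0 + (\<Sum>k\<le>r. g (Suc k) + - a * cc a r k * t ^ Suc k * p (Suc k)))"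
    unfolding s1 s2 sum.distrib by (simp add: algebra_simps)
  also have "\<dots> = phi a t u * AA a t (Suc r) u"
    unfolding s3 by (simp add: g_def p_def cc_Suc_0 cc_Suc_Suc algebra_simps)
  finally show ?thesis using D unfolding g_def by simp
qed

context lapl begin
lemma laplace_repr:
  assumes lap: "\<And>s. 0 \<le> s \<Longrightarrow> (\<integral>x. exp (- s * x) \<partial>M) = exp (- t * s powr a)"
  shows "0 < u \<Longrightarrow> (\<integral>x. x ^ r * exp (- u * x) \<partial>M) = (-1)^r * (phi a t u * AA a t r u)"
proof (induction r arbitrary: u)
  case 0
  then show ?case using lap[of u] by (simp add: AA_def phi_def cc_0)
next
  case (Suc r)
  have d1: "((\<lambda>v. \<integral>x. x ^ r * exp (- v * x) \<partial>M) has_real_derivative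
            (- (\<integral>x. x ^ Suc r * exp (- u * x) \<partial>M))) (at u)"
    by (rule laplace_deriv[OF Suc.prems])
  have d2: "((\<lambda>v. (-1)^r * (phi a t v * AA a t r v)) has_real_derivative
            (- (\<integral>x. x ^ Suc r * exp (- u * x) \<partial>M))) (at u)"
    by (rule has_field_derivative_transform_within_open[OF d1, of "{0<..}"]) (use Suc in auto)
  have d3: "((\<lambda>v. (-1)^r * (phi a t v * AA a t r v)) has_real_derivative
            (-1)^r * (phi a t u * AA a t (Suc r) u)) (at u)"
    by (rule DERIV_cmult[OF AA_deriv[OF Suc.prems]])
  from DERIV_unique[OF d2 d3] show ?case by simp
qed
end

definition EE :: "real \<Rightarrow> real \<Rightarrow> nat \<Rightarrow> real \<Rightarrow> real" where
  "EE a t r u = (-1)^r * (phi a t u * AA a t r u)"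

lemma EE_tderiv:
  assumes u: "0 < u"
  shows "((\<lambda>t. EE a t r u) has_real_derivative
     (- (\<Sum>b\<le>r. of_nat (r choose b) * ff a b * (-1)^b * u powr (a - of_nat b) * EE a t (r - b) u))) (at t)"
proof -
  define q where "q = (\<lambda>k::nat. t ^ k * u powr (of_nat (Suc k) * a - of_nat r))"
  have dA: "((\<lambda>t. AA a t r u) has_real_derivative
      (\<Sum>k\<le>r. cc a r k * (of_nat k * t ^ (k - 1)) * u powr (of_nat k * a - of_nat r))) (at t)"
    unfolding AA_def by (auto intro!: DERIV_sum derivative_eq_intros)
  have dphi: "((\<lambda>t. phi a t u) has_real_derivative phi a t u * (- (u powr a))) (at t)"
    unfolding phi_def by (auto intro!: derivative_eq_intros)
  have D: "((\<lambda>t. EE a t r u) has_real_derivative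
     (-1)^r * (phi a t u * (- (u powr a)) * AA a t r u +
     (\<Sum>k\<le>r. cc a r k * (of_nat k * t ^ (k - 1)) * u powr (of_nat k * a - of_nat r)) * phi a t u)) (at t)"
    unfolding EE_def by (intro DERIV_cmult DERIV_mult dphi dA)
  have s1: "u powr a * AA a t r u = (\<Sum>k\<le>r. cc a r k * q k)"
    unfolding AA_def sum_distrib_left
  proof (rule sum.cong)
    fix k
    have "u powr a * u powr (of_nat k * a - of_nat r) = u powr (of_nat (Suc k) * a - of_nat r)"
      unfolding powr_add[symmetric] by (simp add: algebra_simps)
    then show "u powr a * (cc a r k * t ^ k * u powr (of_nat k * a - of_nat r)) = cc a r k * q k"
      unfolding q_def by (simp add: algebra_simps)
  qed simp
  have s2: "(\<Sum>k\<le>r. cc a r k * (of_nat k * t ^ (k - 1)) * u powr (of_nat k * a - of_nat r))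
      = (\<Sum>k\<le>r. of_nat (Suc k) * cc a r (Suc k) * q k)"
    by (subst sum_shift_vanish) (auto simp: cc_vanish q_def mult_ac intro!: sum.cong)
  have L: "(-1)^r * (phi a t u * (- (u powr a)) * AA a t r u +
     (\<Sum>k\<le>r. cc a r k * (of_nat k * t ^ (k - 1)) * u powr (of_nat k * a - of_nat r)) * phi a t u)
     = (-1)^r * phi a t u * (\<Sum>k\<le>r. (of_nat (Suc k) * cc a r (Suc k) - cc a r k) * q k)"
  proof -
    have "(-1)^r * (phi a t u * (- (u powr a)) * AA a t r u +
     (\<Sum>k\<le>r. cc a r k * (of_nat k * t ^ (k - 1)) * u powr (of_nat k * a - of_nat r)) * phi a t u)
      = (-1)^r * phi a t u * (- (u powr a * AA a t r u) +
     (\<Sum>k\<le>r. cc a r k * (of_nat k * t ^ (k - 1)) * u powr (of_nat k * a - of_nat r)))"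
      by (simp add: algebra_simps)
    also have "\<dots> = (-1)^r * phi a t u * (\<Sum>k\<le>r. (of_nat (Suc k) * cc a r (Suc k) - cc a r k) * q k)"
      unfolding s1 s2 by (simp add: algebra_simps sum_subtractf sum_negf)
    finally show ?thesis .
  qed
  have trm: "of_nat (r choose b) * ff a b * (-1)^b * u powr (a - of_nat b) * EE a t (r - b) u
      = (-1)^r * phi a t u * (\<Sum>k\<le>r. of_nat (r choose b) * ff a b * cc a (r - b) k * q k)" if b: "b \<le> r" for b
  proof -
    have sg: "(-1::real)^b * (-1)^(r - b) = (-1)^r"
      using b by (simp add: power_add[symmetric])
    have ex: "u powr (a - of_nat b) * u powr (of_nat k * a - of_nat (r - b)) = u powr (of_nat (Suc k) * a - of_nat r)" for k
      unfolding powr_add[symmetric] using b by (simp add: of_nat_diff algebra_simps)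
    have "(\<Sum>k\<le>r. of_nat (r choose b) * ff a b * cc a (r - b) k * q k)
        = (\<Sum>k\<le>r - b. of_nat (r choose b) * ff a b * cc a (r - b) k * q k)"
      by (rule sum.mono_neutral_right) (auto simp: cc_vanish)
    also have "\<dots> = of_nat (r choose b) * ff a b * (u powr (a - of_nat b) * AA a t (r - b) u)"
      unfolding AA_def sum_distrib_left
    proof (rule sum.cong)
      fix k
      show "of_nat (r choose b) * ff a b * cc a (r - b) k * q k =
        of_nat (r choose b) * ff a b * (u powr (a - of_nat b) * (cc a (r - b) k * t ^ k * u powr (of_nat k * a - of_nat (r - b))))"
        unfolding q_def ex[symmetric, of k] by (simp add: mult_ac)
    qed simp
    finally show ?thesis unfolding EE_def using sg
      by (simp add: algebra_simps)
  qed
  have R: "- (\<Sum>b\<le>r. of_nat (r choose b) * ff a b * (-1)^b * u powr (a - of_nat b) * EE a t (r - b) u)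
      = (-1)^r * phi a t u * (\<Sum>k\<le>r. (of_nat (Suc k) * cc a r (Suc k) - cc a r k) * q k)"
  proof -
    have "(\<Sum>b\<le>r. of_nat (r choose b) * ff a b * (-1)^b * u powr (a - of_nat b) * EE a t (r - b) u)
       = (-1)^r * phi a t u * (\<Sum>b\<le>r. \<Sum>k\<le>r. of_nat (r choose b) * ff a b * cc a (r - b) k * q k)"
      by (simp add: trm sum_distrib_left)
    also have "(\<Sum>b\<le>r. \<Sum>k\<le>r. of_nat (r choose b) * ff a b * cc a (r - b) k * q k)
        = (\<Sum>k\<le>r. (\<Sum>b\<le>r. of_nat (r choose b) * ff a b * cc a (r - b) k) * q k)"
      by (subst sum.swap) (simp add: sum_distrib_right)
    also have "\<dots> = (\<Sum>k\<le>r. (cc a r k - of_nat (Suc k) * cc a r (Suc k)) * q k)"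
    proof (rule sum.cong)
      fix k
      have "{..r} = insert 0 {1..r}" by auto
      then have "(\<Sum>b\<le>r. of_nat (r choose b) * ff a b * cc a (r - b) k)
          = cc a r k + (\<Sum>b\<in>{1..r}. of_nat (r choose b) * ff a b * cc a (r - b) k)" by simp
      then show "(\<Sum>b\<le>r. of_nat (r choose b) * ff a b * cc a (r - b) k) * q k = (cc a r k - of_nat (Suc k) * cc a r (Suc k)) * q k"
        using cc_tderiv[of k a r] by simp
    qed simp
    finally show ?thesis by (simp add: algebra_simps sum_subtractf sum_negf)
  qed
  show ?thesis using D unfolding L R[symmetric] .
qed

lemma vand_gen:
  fixes h :: "'i \<Rightarrow> 'b \<Rightarrow> nat" and g :: "'i \<Rightarrow> 'b \<Rightarrow> real" and N :: "'i \<Rightarrow> nat"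
  assumes "finite S" "\<And>i. i \<in> S \<Longrightarrow> finite (B i)"
    "\<And>i c. i \<in> S \<Longrightarrow> (\<Sum>b\<in>B i. if h i b = c then g i b else 0) = real (N i choose c)"
  shows "(\<Sum>y\<in>PiE S B. if (\<Sum>i\<in>S. h i (y i)) = a then (\<Prod>i\<in>S. g i (y i)) else 0)
         = real ((\<Sum>i\<in>S. N i) choose a)"
  using assms
proof (induction S arbitrary: a rule: finite_induct)
  case empty
  then show ?case by (cases a) (simp_all add: PiE_empty_domain)
next
  case (insert i S)
  define F where "F = (\<lambda>y. if (\<Sum>i\<in>insert i S. h i (y i)) = a then (\<Prod>i\<in>insert i S. g i (y i)) else 0)"
  have "(\<Sum>y\<in>PiE (insert i S) B. F y) = (\<Sum>(b, z)\<in>B i \<times> PiE S B. F (z(i := b)))"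
    using insert.hyps
    by (intro sum.reindex_bij_witness[of _ "\<lambda>(b, z). z(i := b)" "\<lambda>y. (y i, y(i := undefined))"])
       (auto simp: PiE_def extensional_def)
  also have "\<dots> = (\<Sum>b\<in>B i. \<Sum>z\<in>PiE S B. F (z(i := b)))"
    by (subst sum.cartesian_product) auto
  also have "\<dots> = (\<Sum>b\<in>B i. g i b * (if h i b \<le> a then real ((\<Sum>i\<in>S. N i) choose (a - h i b)) else 0))"
  proof (rule sum.cong)
    fix b assume b: "b \<in> B i"
    have eq: "F (z(i := b)) = g i b * (if (\<Sum>i\<in>S. h i (z i)) = a - h i b \<and> h i b \<le> a then (\<Prod>i\<in>S. g i (z i)) else 0)" for z
    proof -
      have s1: "(\<Sum>i'\<in>S. h i' ((z(i := b)) i')) = (\<Sum>i\<in>S. h i (z i))"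
        using insert.hyps by (intro sum.cong) auto
      have s2: "(\<Prod>i'\<in>S. g i' ((z(i := b)) i')) = (\<Prod>i\<in>S. g i (z i))"
        using insert.hyps by (intro prod.cong) auto
      show ?thesis unfolding F_def using insert.hyps s1 s2 by auto
    qed
    have "(\<Sum>z\<in>PiE S B. F (z(i := b))) = g i b * (\<Sum>z\<in>PiE S B. if (\<Sum>i\<in>S. h i (z i)) = a - h i b \<and> h i b \<le> a then (\<Prod>i\<in>S. g i (z i)) else 0)"
      unfolding eq sum_distrib_left ..
    also have "\<dots> = g i b * (if h i b \<le> a then real ((\<Sum>i\<in>S. N i) choose (a - h i b)) else 0)"
    proof (cases "h i b \<le> a")
      case True
      then show ?thesis using insert.IH[of "a - h i b"] insert.prems by auto
    next
      case False
      then show ?thesis by simp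
    qed
    finally show "(\<Sum>z\<in>PiE S B. F (z(i := b))) = g i b * (if h i b \<le> a then real ((\<Sum>i\<in>S. N i) choose (a - h i b)) else 0)" .
  qed simp
  also have "\<dots> = (\<Sum>b\<in>B i. \<Sum>c\<le>a. if h i b = c then g i b * real ((\<Sum>i\<in>S. N i) choose (a - c)) else 0)"
    by (rule sum.cong) (auto simp: sum.delta')
  also have "\<dots> = (\<Sum>c\<le>a. (\<Sum>b\<in>B i. if h i b = c then g i b else 0) * real ((\<Sum>i\<in>S. N i) choose (a - c)))"
    by (subst sum.swap) (auto simp: sum_distrib_right intro!: sum.cong)
  also have "\<dots> = (\<Sum>c\<le>a. real (N i choose c) * real ((\<Sum>i\<in>S. N i) choose (a - c)))"
    using insert.prems by (intro sum.cong) auto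
  also have "\<dots> = real ((N i + (\<Sum>i\<in>S. N i)) choose a)"
    unfolding vandermonde[symmetric] by simp
  finally show ?case unfolding F_def using insert.hyps by simp
qed

definition XS :: "nat \<Rightarrow> (nat \<Rightarrow> nat) \<Rightarrow> (nat \<Rightarrow> nat) \<Rightarrow> (nat \<Rightarrow> nat \<Rightarrow> nat) set" where
  "XS q k n = PiE {1..q} (\<lambda>i. Omega (k i) (n i))"
definition tot :: "nat \<Rightarrow> (nat \<Rightarrow> nat) \<Rightarrow> (nat \<Rightarrow> nat \<Rightarrow> nat) \<Rightarrow> nat" where
  "tot q k x = (\<Sum>i\<in>{1..q}. \<Sum>j\<in>{1..k i}. x i j)"
definition WW :: "nat \<Rightarrow> (nat \<Rightarrow> nat) \<Rightarrow> (nat \<Rightarrow> nat \<Rightarrow> real) \<Rightarrow> (nat \<Rightarrow> nat \<Rightarrow> nat) \<Rightarrow> real" where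
  "WW q k lam x = (\<Prod>i\<in>{1..q}. \<Prod>j\<in>{1..k i}. lam i j ^ x i j / fact (x i j))"
definition YS :: "nat \<Rightarrow> (nat \<Rightarrow> nat) \<Rightarrow> (nat \<Rightarrow> nat \<Rightarrow> nat) \<Rightarrow> (nat \<Rightarrow> nat \<Rightarrow> nat) set" where
  "YS q k x = PiE {1..q} (\<lambda>i. PiE {1..k i} (\<lambda>j. {0..x i j}))"
definition subf :: "nat \<Rightarrow> (nat \<Rightarrow> nat) \<Rightarrow> (nat \<Rightarrow> nat \<Rightarrow> nat) \<Rightarrow> (nat \<Rightarrow> nat \<Rightarrow> nat) \<Rightarrow> (nat \<Rightarrow> nat \<Rightarrow> nat)" where
  "subf q k x y = (\<lambda>i\<in>{1..q}. \<lambda>j\<in>{1..k i}. x i j - y i j)"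
definition addf :: "nat \<Rightarrow> (nat \<Rightarrow> nat) \<Rightarrow> (nat \<Rightarrow> nat \<Rightarrow> nat) \<Rightarrow> (nat \<Rightarrow> nat \<Rightarrow> nat) \<Rightarrow> (nat \<Rightarrow> nat \<Rightarrow> nat)" where
  "addf q k y z = (\<lambda>i\<in>{1..q}. \<lambda>j\<in>{1..k i}. y i j + z i j)"
definition wtv :: "nat \<Rightarrow> (nat \<Rightarrow> nat) \<Rightarrow> (nat \<Rightarrow> nat \<Rightarrow> nat) \<Rightarrow> (nat \<Rightarrow> nat)" where
  "wtv q k y = (\<lambda>i. if i \<in> {1..q} then (\<Sum>j\<in>{1..k i}. j * y i j) else 0)"
definition MS :: "nat \<Rightarrow> (nat \<Rightarrow> nat) \<Rightarrow> (nat \<Rightarrow> nat) set" where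
  "MS q n = {m \<in> NQ q. \<forall>i\<in>{1..q}. m i \<le> n i}"

lemma Omega_sub: "Omega K m \<subseteq> PiE {1..K} (\<lambda>_. {0..m})"
proof
  fix x assume x: "x \<in> Omega K m"
  have "x j \<le> m" if j: "j \<in> {1..K}" for j
  proof -
    have "x j \<le> j * x j" using j by simp
    also have "\<dots> \<le> (\<Sum>j\<in>{1..K}. j * x j)" by (rule member_le_sum) (use j in auto)
    finally show ?thesis using x by (simp add: Omega_def)
  qed
  then show "x \<in> PiE {1..K} (\<lambda>_. {0..m})" using x by (auto simp: Omega_def PiE_def)
qed

lemma finite_Omega: "finite (Omega K m)"
  by (rule finite_subset[OF Omega_sub]) (auto intro: finite_PiE)

lemma finite_XS: "finite (XS q k n)"
  unfolding XS_def by (auto intro!: finite_PiE finite_Omega)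

lemma finite_YS: "finite (YS q k x)"
  unfolding YS_def by (auto intro!: finite_PiE)

lemma finite_MS: "finite (MS q n)"
proof -
  have "MS q n \<subseteq> (\<lambda>f i. if i \<in> {1..q} then f i else 0) ` PiE {1..q} (\<lambda>i. {0..n i})"
  proof
    fix m assume m: "m \<in> MS q n"
    have "m = (\<lambda>i. if i \<in> {1..q} then (restrict m {1..q}) i else 0)"
      using m by (auto simp: MS_def NQ_def fun_eq_iff)
    moreover have "restrict m {1..q} \<in> PiE {1..q} (\<lambda>i. {0..n i})" using m by (auto simp: MS_def)
    ultimately show "m \<in> (\<lambda>f i. if i \<in> {1..q} then f i else 0) ` PiE {1..q} (\<lambda>i. {0..n i})" by blast
  qed
  then show ?thesis by (rule finite_subset) (auto intro!: finite_PiE)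
qed

lemma vand_nested:
  "(\<Sum>y\<in>YS q k x. if tot q k y = a then (\<Prod>i\<in>{1..q}. \<Prod>j\<in>{1..k i}. real (x i j choose y i j)) else 0)
     = real (tot q k x choose a)"
  unfolding YS_def tot_def
proof (rule vand_gen)
  fix i c assume "i \<in> {1..q}"
  show "(\<Sum>b\<in>PiE {1..k i} (\<lambda>j. {0..x i j}). if (\<Sum>j\<in>{1..k i}. b j) = c then \<Prod>j\<in>{1..k i}. real (x i j choose b j) else 0)
        = real ((\<Sum>j\<in>{1..k i}. x i j) choose c)"
  proof (rule vand_gen)
    fix j c' assume "j \<in> {1..k i}"
    show "(\<Sum>b\<in>{0..x i j}. if b = c' then real (x i j choose b) else 0) = real (x i j choose c')"
      by (auto simp: sum.delta binomial_eq_0)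
  qed auto
qed (auto intro: finite_PiE)

lemma XS_iff: "x \<in> XS q k n \<longleftrightarrow> (\<forall>i\<in>{1..q}. x i \<in> extensional {1..k i} \<and> (\<Sum>j\<in>{1..k i}. j * x i j) = n i) \<and> x \<in> extensional {1..q}"
  by (auto simp: XS_def Omega_def PiE_iff)

lemma YS_iff: "y \<in> YS q k x \<longleftrightarrow> (\<forall>i\<in>{1..q}. y i \<in> extensional {1..k i} \<and> (\<forall>j\<in>{1..k i}. y i j \<le> x i j)) \<and> y \<in> extensional {1..q}"
  by (auto simp: YS_def PiE_iff)

lemma tot_subf:
  assumes "y \<in> YS q k x"
  shows "tot q k x = tot q k y + tot q k (subf q k x y)"
proof -
  have "tot q k x = (\<Sum>i\<in>{1..q}. \<Sum>j\<in>{1..k i}. y i j + (x i j - y i j))"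
    unfolding tot_def using assms by (intro sum.cong) (auto simp: YS_iff)
  also have "\<dots> = tot q k y + tot q k (subf q k x y)"
    unfolding tot_def subf_def by (simp add: sum.distrib)
  finally show ?thesis .
qed

lemma WW_split:
  assumes "y \<in> YS q k x"
  shows "WW q k lam x * (\<Prod>i\<in>{1..q}. \<Prod>j\<in>{1..k i}. real (x i j choose y i j))
       = WW q k lam y * WW q k lam (subf q k x y)"
proof -
  have e: "lam i j ^ x i j / fact (x i j) * real (x i j choose y i j)
      = lam i j ^ y i j / fact (y i j) * (lam i j ^ (x i j - y i j) / fact (x i j - y i j))"
    if "i \<in> {1..q}" "j \<in> {1..k i}" for i j
  proof -
    have le: "y i j \<le> x i j" using assms that by (auto simp: YS_iff)
    have "lam i j ^ x i j = lam i j ^ y i j * lam i j ^ (x i j - y i j)"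
      using le by (simp add: power_add[symmetric])
    then show ?thesis using le by (simp add: binomial_fact)
  qed
  have W2: "WW q k lam (subf q k x y) = (\<Prod>i\<in>{1..q}. \<Prod>j\<in>{1..k i}. lam i j ^ (x i j - y i j) / fact (x i j - y i j))"
    unfolding WW_def by (intro prod.cong refl) (auto simp: subf_def)
  have "WW q k lam x * (\<Prod>i\<in>{1..q}. \<Prod>j\<in>{1..k i}. real (x i j choose y i j))
      = (\<Prod>i\<in>{1..q}. \<Prod>j\<in>{1..k i}. lam i j ^ x i j / fact (x i j) * real (x i j choose y i j))"
    by (simp only: WW_def prod.distrib[symmetric])
  also have "\<dots> = (\<Prod>i\<in>{1..q}. \<Prod>j\<in>{1..k i}. lam i j ^ y i j / fact (y i j) * (lam i j ^ (x i j - y i j) / fact (x i j - y i j)))"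
    by (intro prod.cong refl e) auto
  also have "\<dots> = WW q k lam y * WW q k lam (subf q k x y)"
    unfolding W2 by (simp only: WW_def prod.distrib[symmetric])
  finally show ?thesis .
qed

lemma comb_main:
  fixes c E :: "nat \<Rightarrow> real"
  assumes n: "n \<in> NQ q"
  shows "(\<Sum>x\<in>XS q k n. WW q k lam x * (\<Sum>b\<le>tot q k x. real (tot q k x choose b) * c b * E (tot q k x - b)))
    = (\<Sum>m\<in>MS q n. \<Sum>y\<in>XS q k m. c (tot q k y) * WW q k lam y *
          (\<Sum>z\<in>XS q k (\<lambda>i. n i - m i). WW q k lam z * E (tot q k z)))"
proof -
  define P where "P = (\<lambda>x y. (\<Prod>i\<in>{1..q}. \<Prod>j\<in>{1..k i}. real (x i j choose y i j)))"
  define G where "G = (\<lambda>(x, y). c (tot q k y) * WW q k lam y * WW q k lam (subf q k x y) * E (tot q k (subf q k x y)))"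
  define H where "H = (\<lambda>(m :: nat \<Rightarrow> nat, y, z). c (tot q k y) * WW q k lam y * (WW q k lam z * E (tot q k z)))"
  have stepa: "WW q k lam x * (\<Sum>b\<le>tot q k x. real (tot q k x choose b) * c b * E (tot q k x - b))
       = (\<Sum>y\<in>YS q k x. G (x, y))" for x
  proof -
    have "(\<Sum>b\<le>tot q k x. real (tot q k x choose b) * c b * E (tot q k x - b))
       = (\<Sum>b\<le>tot q k x. \<Sum>y\<in>YS q k x. if tot q k y = b then P x y * c b * E (tot q k x - b) else 0)"
      unfolding vand_nested[symmetric, of q k x] P_def
      by (auto simp: sum_distrib_right intro!: sum.cong)
    also have "\<dots> = (\<Sum>y\<in>YS q k x. \<Sum>b\<le>tot q k x. if tot q k y = b then P x y * c b * E (tot q k x - b) else 0)"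
      by (rule sum.swap)
    also have "\<dots> = (\<Sum>y\<in>YS q k x. P x y * c (tot q k y) * E (tot q k (subf q k x y)))"
    proof (rule sum.cong)
      fix y assume y: "y \<in> YS q k x"
      show "(\<Sum>b\<le>tot q k x. if tot q k y = b then P x y * c b * E (tot q k x - b) else 0) =
            P x y * c (tot q k y) * E (tot q k (subf q k x y))"
        using tot_subf[OF y] by (simp add: sum.delta')
    qed simp
    finally have inner: "(\<Sum>b\<le>tot q k x. real (tot q k x choose b) * c b * E (tot q k x - b))
       = (\<Sum>y\<in>YS q k x. P x y * c (tot q k y) * E (tot q k (subf q k x y)))" .
    have "WW q k lam x * (\<Sum>y\<in>YS q k x. P x y * c (tot q k y) * E (tot q k (subf q k x y)))
       = (\<Sum>y\<in>YS q k x. WW q k lam x * P x y * c (tot q k y) * E (tot q k (subf q k x y)))"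
      by (simp add: sum_distrib_left mult_ac)
    also have "\<dots> = (\<Sum>y\<in>YS q k x. G (x, y))"
    proof (rule sum.cong)
      fix y assume y: "y \<in> YS q k x"
      have "WW q k lam x * P x y = WW q k lam y * WW q k lam (subf q k x y)"
        using WW_split[OF y] unfolding P_def .
      then show "WW q k lam x * P x y * c (tot q k y) * E (tot q k (subf q k x y)) = G (x, y)"
        by (simp add: G_def mult_ac)
    qed simp
    finally show ?thesis unfolding inner .
  qed
  have L: "(\<Sum>x\<in>XS q k n. WW q k lam x * (\<Sum>b\<le>tot q k x. real (tot q k x choose b) * c b * E (tot q k x - b)))
      = sum G (Sigma (XS q k n) (YS q k))"
    unfolding stepa by (subst sum.Sigma) (auto intro: finite_XS finite_YS)
  have R: "(\<Sum>m\<in>MS q n. \<Sum>y\<in>XS q k m. c (tot q k y) * WW q k lam y *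
          (\<Sum>z\<in>XS q k (\<lambda>i. n i - m i). WW q k lam z * E (tot q k z)))
      = sum H (Sigma (MS q n) (\<lambda>m. XS q k m \<times> XS q k (\<lambda>i. n i - m i)))"
  proof -
    have "(\<Sum>m\<in>MS q n. \<Sum>y\<in>XS q k m. c (tot q k y) * WW q k lam y *
          (\<Sum>z\<in>XS q k (\<lambda>i. n i - m i). WW q k lam z * E (tot q k z)))
       = (\<Sum>m\<in>MS q n. \<Sum>yz\<in>XS q k m \<times> XS q k (\<lambda>i. n i - m i). H (m, yz))"
      unfolding H_def sum_distrib_left
      by (intro sum.cong refl, subst sum.cartesian_product) auto
    also have "\<dots> = sum H (Sigma (MS q n) (\<lambda>m. XS q k m \<times> XS q k (\<lambda>i. n i - m i)))"
      by (subst sum.Sigma) (auto intro: finite_MS finite_XS)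
    finally show ?thesis .
  qed
  have bij: "sum G (Sigma (XS q k n) (YS q k)) = sum H (Sigma (MS q n) (\<lambda>m. XS q k m \<times> XS q k (\<lambda>i. n i - m i)))"
  proof (rule sum.reindex_bij_witness[of _ "\<lambda>(m, y, z). (addf q k y z, y)" "\<lambda>(x, y). (wtv q k y, y, subf q k x y)"])
    fix a assume a: "a \<in> Sigma (XS q k n) (YS q k)"
    then obtain x y where xy: "a = (x, y)" "x \<in> XS q k n" "y \<in> YS q k x" by auto
    have le: "\<And>i j. i \<in> {1..q} \<Longrightarrow> j \<in> {1..k i} \<Longrightarrow> y i j \<le> x i j" using xy by (auto simp: YS_iff)
    show "(case (case a of (x, y) \<Rightarrow> (wtv q k y, y, subf q k x y)) of (m, y, z) \<Rightarrow> (addf q k y z, y)) = a"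
    proof -
      have "addf q k y (subf q k x y) = x"
        using xy le by (auto simp: fun_eq_iff addf_def subf_def XS_iff extensional_def)
      then show ?thesis using xy by simp
    qed
    show "(case a of (x, y) \<Rightarrow> (wtv q k y, y, subf q k x y)) \<in> Sigma (MS q n) (\<lambda>m. XS q k m \<times> XS q k (\<lambda>i. n i - m i))"
    proof -
      have sle: "(\<Sum>j\<in>{1..k i}. j * y i j) \<le> (\<Sum>j\<in>{1..k i}. j * x i j)" if "i \<in> {1..q}" for i
        using le that by (intro sum_mono) auto
      have xs: "(\<Sum>j\<in>{1..k i}. j * x i j) = n i" if "i \<in> {1..q}" for i
        using xy that by (auto simp: XS_iff)
      have m: "wtv q k y \<in> MS q n"
        using sle xs by (auto simp: MS_def NQ_def wtv_def)
      have y: "y \<in> XS q k (wtv q k y)"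
        using xy by (auto simp: XS_iff YS_iff wtv_def)
      have z: "subf q k x y \<in> XS q k (\<lambda>i. n i - wtv q k y i)"
        unfolding XS_iff
      proof (intro conjI ballI)
        fix i assume i: "i \<in> {1..q}"
        show "subf q k x y i \<in> extensional {1..k i}" using i by (simp add: subf_def)
        have "(\<Sum>j\<in>{1..k i}. j * subf q k x y i j) = (\<Sum>j\<in>{1..k i}. j * x i j - j * y i j)"
          using i by (intro sum.cong) (auto simp: subf_def diff_mult_distrib2)
        also have "\<dots> = (\<Sum>j\<in>{1..k i}. j * x i j) - (\<Sum>j\<in>{1..k i}. j * y i j)"
          using le i by (intro sum_subtractf_nat) auto
        finally show "(\<Sum>j\<in>{1..k i}. j * subf q k x y i j) = n i - wtv q k y i"
          using xs i by (simp add: wtv_def)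
      qed (simp add: subf_def)
      show ?thesis using xy m y z by simp
    qed
  next
    fix b assume b: "b \<in> Sigma (MS q n) (\<lambda>m. XS q k m \<times> XS q k (\<lambda>i. n i - m i))"
    then obtain m y z where myz: "b = (m, y, z)" "m \<in> MS q n" "y \<in> XS q k m" "z \<in> XS q k (\<lambda>i. n i - m i)" by auto
    show "(case (case b of (m, y, z) \<Rightarrow> (addf q k y z, y)) of (x, y) \<Rightarrow> (wtv q k y, y, subf q k x y)) = b"
    proof -
      have "wtv q k y = m" using myz by (auto simp: fun_eq_iff wtv_def XS_iff MS_def NQ_def)
      moreover have "subf q k (addf q k y z) y = z"
        using myz by (auto simp: fun_eq_iff addf_def subf_def XS_iff extensional_def)
      ultimately show ?thesis using myz by simp
    qed
    show "(case b of (m, y, z) \<Rightarrow> (addf q k y z, y)) \<in> Sigma (XS q k n) (YS q k)"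
    proof -
      have "addf q k y z \<in> XS q k n"
        unfolding XS_iff
      proof (intro conjI ballI)
        fix i assume i: "i \<in> {1..q}"
        show "addf q k y z i \<in> extensional {1..k i}" using i by (simp add: addf_def)
        have "(\<Sum>j\<in>{1..k i}. j * addf q k y z i j) = (\<Sum>j\<in>{1..k i}. j * y i j) + (\<Sum>j\<in>{1..k i}. j * z i j)"
          using i by (simp add: addf_def sum.distrib[symmetric] add_mult_distrib2)
        also have "\<dots> = n i" using myz i by (auto simp: XS_iff MS_def)
        finally show "(\<Sum>j\<in>{1..k i}. j * addf q k y z i j) = n i" .
      qed (simp add: addf_def)
      moreover have "y \<in> YS q k (addf q k y z)"
        using myz by (auto simp: YS_iff XS_iff addf_def)
      ultimately show ?thesis using myz by simp
    qed
  next
    fix a assume "a \<in> Sigma (XS q k n) (YS q k)"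
    then show "H (case a of (x, y) \<Rightarrow> (wtv q k y, y, subf q k x y)) = G a"
      by (auto simp: G_def H_def)
  qed
  show ?thesis unfolding L R bij ..
qed

lemma poisson0_nonpos: "r \<le> 0 \<Longrightarrow> poisson0 r = return_pmf 0"
  by (simp add: poisson0_def)

lemma pmf_poisson0: "0 \<le> r \<Longrightarrow> pmf (poisson0 r) b = r ^ b / fact b * exp (- r)"
proof (cases "r = 0")
  case True then show ?thesis by (cases b) (auto simp: poisson0_def indicator_def)
next
  case False
  assume "0 \<le> r"
  with False have "0 < r" by simp
  then show ?thesis by (simp add: poisson0_def pmf_poisson)
qed

lemma pmf_GCP:
  assumes l: "\<And>j. j \<in> {1..K} \<Longrightarrow> 0 \<le> l j * s"
  shows "pmf (GCP_pmf K l s) m = (\<Sum>x\<in>Omega K m. \<Prod>j\<in>{1..K}. pmf (poisson0 (l j * s)) (x j))"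
proof -
  define P where "P = Pi_pmf {1..K} (0::nat) (\<lambda>j. poisson0 (l j * s))"
  define f where "f = (\<lambda>N::nat \<Rightarrow> nat. \<Sum>j\<in>{1..K}. j * N j)"
  define ext where "ext = (\<lambda>(x::nat \<Rightarrow> nat) j. if j \<in> {1..K} then x j else (0::nat))"
  define A where "A = {N. (\<forall>j. j \<notin> {1..K} \<longrightarrow> N j = 0) \<and> f N = m}"
  have setP: "set_pmf P \<subseteq> {N. \<forall>j. j \<notin> {1..K} \<longrightarrow> N j = 0}"
    unfolding P_def by (rule set_Pi_pmf_subset) simp
  have Aeq: "A = ext ` Omega K m"
  proof
    show "A \<subseteq> ext ` Omega K m"
    proof
      fix N assume N: "N \<in> A"
      have "N = ext (restrict N {1..K})" using N by (auto simp: A_def ext_def fun_eq_iff)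
      moreover have "restrict N {1..K} \<in> Omega K m" using N by (auto simp: A_def f_def Omega_def)
      ultimately show "N \<in> ext ` Omega K m" by blast
    qed
    show "ext ` Omega K m \<subseteq> A"
      by (auto simp: A_def ext_def f_def Omega_def)
  qed
  have inj: "inj_on ext (Omega K m)"
  proof (rule inj_onI)
    fix x y assume "x \<in> Omega K m" "y \<in> Omega K m" "ext x = ext y"
    note xy = this
    show "x = y"
    proof (rule ext)
      fix j show "x j = y j"
      proof (cases "j \<in> {1..K}")
        case True then show ?thesis using fun_cong[OF xy(3), of j] by (simp add: ext_def)
      next
        case False then show ?thesis using xy(1,2) by (auto simp: Omega_def PiE_def extensional_def)
      qed
    qed
  qed
  have finA: "finite A" unfolding Aeq by (intro finite_imageI finite_Omega)
  have "pmf (GCP_pmf K l s) m = measure P (f -` {m})"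
    unfolding GCP_pmf_def P_def f_def by (simp add: pmf_map)
  also have "\<dots> = measure P (f -` {m} \<inter> set_pmf P)" by (simp add: measure_Int_set_pmf)
  also have "f -` {m} \<inter> set_pmf P = A \<inter> set_pmf P" using setP by (auto simp: A_def)
  also have "measure P (A \<inter> set_pmf P) = measure P A" by (simp add: measure_Int_set_pmf)
  also have "\<dots> = (\<Sum>N\<in>A. pmf P N)" by (rule measure_measure_pmf_finite[OF finA])
  also have "\<dots> = (\<Sum>N\<in>A. \<Prod>j\<in>{1..K}. pmf (poisson0 (l j * s)) (N j))"
    unfolding P_def by (intro sum.cong refl) (auto simp: pmf_Pi A_def)
  also have "\<dots> = (\<Sum>x\<in>Omega K m. \<Prod>j\<in>{1..K}. pmf (poisson0 (l j * s)) (ext x j))"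
    unfolding Aeq by (rule sum.reindex[OF inj, unfolded comp_def])
  also have "\<dots> = (\<Sum>x\<in>Omega K m. \<Prod>j\<in>{1..K}. pmf (poisson0 (l j * s)) (x j))"
    by (intro sum.cong prod.cong refl) (auto simp: ext_def)
  finally show ?thesis .
qed

definition lamtot :: "nat \<Rightarrow> (nat \<Rightarrow> nat) \<Rightarrow> (nat \<Rightarrow> nat \<Rightarrow> real) \<Rightarrow> real" where
  "lamtot q k lam = (\<Sum>i\<in>{1..q}. \<Sum>j\<in>{1..k i}. lam i j)"

lemma pmf_MGCP:
  assumes n: "n \<in> NQ q" and s: "0 \<le> s" and lam: "\<And>i j. i \<in> {1..q} \<Longrightarrow> j \<in> {1..k i} \<Longrightarrow> 0 \<le> lam i j"
  shows "pmf (MGCP_pmf q k lam s) n = (\<Sum>x\<in>XS q k n. exp (- lamtot q k lam * s) * s ^ tot q k x * WW q k lam x)"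
proof -
  have "pmf (MGCP_pmf q k lam s) n = (\<Prod>i\<in>{1..q}. pmf (GCP_pmf (k i) (lam i) s) (n i))"
    unfolding MGCP_pmf_def using n by (simp add: pmf_Pi NQ_def)
  also have "\<dots> = (\<Prod>i\<in>{1..q}. \<Sum>x\<in>Omega (k i) (n i). \<Prod>j\<in>{1..k i}. pmf (poisson0 (lam i j * s)) (x j))"
    using lam s by (intro prod.cong refl pmf_GCP) auto
  also have "\<dots> = (\<Sum>x\<in>XS q k n. \<Prod>i\<in>{1..q}. \<Prod>j\<in>{1..k i}. pmf (poisson0 (lam i j * s)) (x i j))"
    unfolding XS_def by (rule prod_sum_PiE) (auto intro: finite_Omega)
  also have "\<dots> = (\<Sum>x\<in>XS q k n. exp (- lamtot q k lam * s) * s ^ tot q k x * WW q k lam x)"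
  proof (rule sum.cong[OF refl])
    fix x
    have "(\<Prod>i\<in>{1..q}. \<Prod>j\<in>{1..k i}. pmf (poisson0 (lam i j * s)) (x i j))
       = (\<Prod>i\<in>{1..q}. \<Prod>j\<in>{1..k i}. exp (- (lam i j * s)) * s ^ x i j * (lam i j ^ x i j / fact (x i j)))"
      using lam s by (intro prod.cong refl) (auto simp: pmf_poisson0 power_mult_distrib)
    also have "\<dots> = (\<Prod>i\<in>{1..q}. \<Prod>j\<in>{1..k i}. exp (- (lam i j * s))) * (\<Prod>i\<in>{1..q}. \<Prod>j\<in>{1..k i}. s ^ x i j)
         * WW q k lam x"
      unfolding WW_def by (simp only: prod.distrib)
    also have "(\<Prod>i\<in>{1..q}. \<Prod>j\<in>{1..k i}. exp (- (lam i j * s))) = exp (- lamtot q k lam * s)"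
    proof -
      have "exp (- lamtot q k lam * s) = exp (\<Sum>i\<in>{1..q}. \<Sum>j\<in>{1..k i}. - (lam i j * s))"
        unfolding lamtot_def by (simp add: sum_distrib_right sum_negf)
      also have "\<dots> = (\<Prod>i\<in>{1..q}. \<Prod>j\<in>{1..k i}. exp (- (lam i j * s)))"
        by (simp only: exp_sum finite_atLeastAtMost)
      finally show ?thesis by simp
    qed
    also have "(\<Prod>i\<in>{1..q}. \<Prod>j\<in>{1..k i}. s ^ x i j) = s ^ tot q k x"
      unfolding tot_def by (simp add: power_sum)
    finally show "(\<Prod>i\<in>{1..q}. \<Prod>j\<in>{1..k i}. pmf (poisson0 (lam i j * s)) (x i j)) =
       exp (- lamtot q k lam * s) * s ^ tot q k x * WW q k lam x" .
  qed
  finally show ?thesis .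
qed

lemma MGCP_max:
  assumes lam: "\<And>i j. i \<in> {1..q} \<Longrightarrow> j \<in> {1..k i} \<Longrightarrow> 0 \<le> lam i j"
  shows "MGCP_pmf q k lam s = MGCP_pmf q k lam (max s 0)"
proof (cases "0 \<le> s")
  case True then show ?thesis by simp
next
  case False
  have "poisson0 (lam i j * s) = poisson0 (lam i j * max s 0)" if "i \<in> {1..q}" "j \<in> {1..k i}" for i j
  proof -
    have "lam i j * s \<le> 0" using lam[OF that] False by (simp add: mult_nonneg_nonpos)
    then show ?thesis using False by (simp add: poisson0_nonpos)
  qed
  then show ?thesis unfolding MGCP_pmf_def GCP_pmf_def
    by (intro Pi_pmf_cong refl arg_cong[where f="map_pmf _"]) auto
qed

lemma lamtot_pos:
  assumes q: "q \<ge> 1" and k: "\<And>i. i \<in> {1..q} \<Longrightarrow> k i \<ge> 1"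
    and lam_pos: "\<And>i j. i \<in> {1..q} \<Longrightarrow> j \<in> {1..k i} \<Longrightarrow> lam i j > 0"
  shows "0 < lamtot q k lam"
  unfolding lamtot_def
proof (rule sum_pos)
  show "finite {1..q}" "{1..q} \<noteq> {}" using q by auto
  fix i assume i: "i \<in> {1..q}"
  show "0 < (\<Sum>j\<in>{1..k i}. lam i j)"
    by (rule sum_pos) (use k[OF i] lam_pos[OF i] in auto)
qed

lemma P_repr:
  assumes lam: "\<And>i j. i \<in> {1..q} \<Longrightarrow> j \<in> {1..k i} \<Longrightarrow> 0 \<le> lam i j"
    and L: "0 < lamtot q k lam"
    and mu_prob: "prob_space (mu t)" and mu_sets: "sets (mu t) = sets borel"
    and mu_nonneg: "AE x in mu t. 0 \<le> x"
    and lap: "\<And>s. s \<ge> 0 \<Longrightarrow> (\<integral>x. exp (- s * x) \<partial>(mu t)) = exp (- t * s powr a)"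
    and n: "n \<in> NQ q"
  shows "MGSFCP_prob q k lam mu n t = (\<Sum>x\<in>XS q k n. WW q k lam x * EE a t (tot q k x) (lamtot q k lam))"
proof -
  interpret lapl "mu t" by (rule lapl.intro[OF mu_prob mu_sets mu_nonneg])
  define g where "g = (\<lambda>s. \<Sum>x\<in>XS q k n. exp (- lamtot q k lam * s) * s ^ tot q k x * WW q k lam x)"
  have "MGSFCP_prob q k lam mu n t = (\<integral>s. g (max s 0) \<partial>(mu t))"
  proof -
    have pt: "pmf (MGCP_pmf q k lam s) n = g (max s 0)" for s
      using MGCP_max[OF lam, where s=s] pmf_MGCP[OF n _ lam, where s="max s 0"] by (simp add: g_def)
    show ?thesis by (simp only: MGSFCP_prob_def pt)
  qed
  also have "\<dots> = (\<integral>s. g s \<partial>(mu t))"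
    by (rule integral_cong_AE) (auto intro!: meas simp: g_def intro: AE_mp[OF nonneg])
  also have "\<dots> = (\<Sum>x\<in>XS q k n. (\<integral>s. s ^ tot q k x * exp (- lamtot q k lam * s) \<partial>(mu t)) * WW q k lam x)"
  proof -
    have "(\<integral>s. g s \<partial>(mu t)) = (\<integral>s. (\<Sum>x\<in>XS q k n. s ^ tot q k x * exp (- lamtot q k lam * s) * WW q k lam x) \<partial>(mu t))"
      unfolding g_def by (intro Bochner_Integration.integral_cong refl sum.cong) (simp_all add: mult_ac)
    also have "\<dots> = (\<Sum>x\<in>XS q k n. (\<integral>s. s ^ tot q k x * exp (- lamtot q k lam * s) * WW q k lam x \<partial>(mu t)))"
    proof (rule Bochner_Integration.integral_sum[where f="\<lambda>x s. s ^ tot q k x * exp (- lamtot q k lam * s) * WW q k lam x"])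
      fix x show "integrable (mu t) (\<lambda>s. s ^ tot q k x * exp (- lamtot q k lam * s) * WW q k lam x)"
        by (intro integrable_mult_left integrable_pe L)
    qed
    also have "\<dots> = (\<Sum>x\<in>XS q k n. (\<integral>s. s ^ tot q k x * exp (- lamtot q k lam * s) \<partial>(mu t)) * WW q k lam x)"
      by (intro sum.cong refl Bochner_Integration.integral_mult_left integrable_pe L)
    finally show ?thesis .
  qed
  also have "\<dots> = (\<Sum>x\<in>XS q k n. WW q k lam x * EE a t (tot q k x) (lamtot q k lam))"
    by (intro sum.cong refl, subst laplace_repr[OF lap L]) (simp_all add: EE_def mult_ac L)
  finally show ?thesis .
qed

lemma gamma_ff:
  assumes a: "0 < a"
  shows "Gamma (a + 1) * rGamma (a - real b + 1) = ff a b"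
proof (induction b)
  case 0
  have "Gamma (a + 1) > 0" using a by simp
  then show ?case by (simp add: rGamma_inverse_Gamma)
next
  case (Suc b)
  have "rGamma (a - real (Suc b) + 1) = (a - real b) * rGamma (a - real b + 1)"
    using rGamma_plus1[of "a - real b"] by simp
  then show ?case using Suc by (simp add: ff_Suc)
qed

lemma prod_term:
  "(\<Prod>i\<in>{1..q}. \<Prod>j\<in>{1..k i}. (- lam i j / L) ^ x i j / fact (x i j))
     = (- 1 / L) ^ tot q k x * WW q k lam x"
proof -
  have "(\<Prod>i\<in>{1..q}. \<Prod>j\<in>{1..k i}. (- lam i j / L) ^ x i j / fact (x i j))
     = (\<Prod>i\<in>{1..q}. \<Prod>j\<in>{1..k i}. (- 1 / L) ^ x i j * (lam i j ^ x i j / fact (x i j)))"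
  proof (intro prod.cong refl)
    fix i j
    have "- lam i j / L = (- 1 / L) * lam i j" by simp
    then show "(- lam i j / L) ^ x i j / fact (x i j) = (- 1 / L) ^ x i j * (lam i j ^ x i j / fact (x i j))"
      by (simp only: power_mult_distrib) simp
  qed
  also have "\<dots> = (\<Prod>i\<in>{1..q}. \<Prod>j\<in>{1..k i}. (- 1 / L) ^ x i j) * WW q k lam x"
    unfolding WW_def by (simp only: prod.distrib)
  also have "(\<Prod>i\<in>{1..q}. \<Prod>j\<in>{1..k i}. (- 1 / L) ^ x i j) = (- 1 / L) ^ tot q k x"
    unfolding tot_def by (simp add: power_sum)
  finally show ?thesis .
qed

lemma powr_term:
  assumes L: "0 < L"
  shows "L powr a * (- 1 / L) ^ m = (-1) ^ m * L powr (a - real m)"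
proof -
  have "(- 1 / L) ^ m = (-1) ^ m / L ^ m" by (rule power_divide)
  moreover have "L powr (a - real m) = L powr a / L ^ m" using L by (simp add: powr_diff powr_realpow)
  ultimately show ?thesis by simp
qed

theorem mainTheorem2:
  fixes q :: nat and k :: "nat \<Rightarrow> nat" and lam :: "nat \<Rightarrow> nat \<Rightarrow> real"
    and \<alpha> :: real and mu :: "real \<Rightarrow> real measure" and n :: "nat \<Rightarrow> nat"
  assumes q: "q \<ge> 1"
    and k: "\<And>i. i \<in> {1..q} \<Longrightarrow> k i \<ge> 1"
    and lam_pos: "\<And>i j. i \<in> {1..q} \<Longrightarrow> j \<in> {1..k i} \<Longrightarrow> lam i j > 0"
    and alpha: "0 < \<alpha>" "\<alpha> < 1"
    and mu_prob: "\<And>t. t \<ge> 0 \<Longrightarrow> prob_space (mu t)"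
    and mu_sets: "\<And>t. t \<ge> 0 \<Longrightarrow> sets (mu t) = sets borel"
    and mu_nonneg: "\<And>t. t \<ge> 0 \<Longrightarrow> AE x in mu t. 0 \<le> x"
    and mu_laplace: "\<And>t s. t \<ge> 0 \<Longrightarrow> s \<ge> 0 \<Longrightarrow>
                       (\<integral>x. exp (- s * x) \<partial>(mu t)) = exp (- t * s powr \<alpha>)"
    and n: "n \<in> NQ q"
  shows "(\<forall>t>0. ((\<lambda>t. MGSFCP_prob q k lam mu n t) has_real_derivative
            (- (\<Sum>\<^sub>\<infinity>m\<in>NQ q. \<Sum>x\<in>PiE {1..q} (\<lambda>i. Omega (k i) (m i)).
                  (\<Sum>i\<in>{1..q}. \<Sum>j\<in>{1..k i}. lam i j) powr \<alpha> * Gamma (\<alpha> + 1)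
                  * MGSFCP_prob_diff q k lam mu n m t
                  * rGamma (\<alpha> - (\<Sum>i\<in>{1..q}. \<Sum>j\<in>{1..k i}. real (x i j)) + 1)
                  * (\<Prod>i\<in>{1..q}. \<Prod>j\<in>{1..k i}.
                       (- lam i j / (\<Sum>i\<in>{1..q}. \<Sum>j\<in>{1..k i}. lam i j)) ^ (x i j) / fact (x i j)))))
          (at t))
         \<and> MGSFCP_prob q k lam mu n 0 = (if n = (\<lambda>_. 0) then 1 else 0)"
proof -
  have lam0: "0 \<le> lam i j" if "i \<in> {1..q}" "j \<in> {1..k i}" for i j
    using lam_pos[OF that] by simp
  have L: "0 < lamtot q k lam" by (rule lamtot_pos[OF q k lam_pos])
  have Leq: "(\<Sum>i\<in>{1..q}. \<Sum>j\<in>{1..k i}. lam i j) = lamtot q k lam" by (simp add: lamtot_def)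
  have rep: "MGSFCP_prob q k lam mu n' t = (\<Sum>x\<in>XS q k n'. WW q k lam x * EE \<alpha> t (tot q k x) (lamtot q k lam))"
    if "0 \<le> t" "n' \<in> NQ q" for t n'
    by (rule P_repr[where mu=mu and t=t and a="\<alpha>" and q=q and k=k and lam=lam and n=n', OF lam0 L mu_prob[OF that(1)] mu_sets[OF that(1)] mu_nonneg[OF that(1)] mu_laplace[OF that(1)] that(2)])
  have init: "MGSFCP_prob q k lam mu n 0 = (if n = (\<lambda>_. 0) then 1 else 0)"
  proof -
    have AA0: "AA \<alpha> 0 r (lamtot q k lam) = (if r = 0 then 1 else 0)" for r
    proof (cases "r = 0")
      case True then show ?thesis using L by (simp add: AA_def cc_0)
    next
      case False then show ?thesis by (auto simp: AA_def intro!: sum.neutral) (metis False cc_r_0 gr0I)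
    qed
    have E0: "EE \<alpha> 0 r (lamtot q k lam) = (if r = 0 then 1 else 0)" for r
      by (simp add: EE_def phi_def AA0)
    have p0: "MGSFCP_prob q k lam mu n 0 = (\<Sum>x\<in>XS q k n. WW q k lam x * (if tot q k x = 0 then 1 else 0))"
      using rep[OF _ n, of 0] by (simp add: E0)
    have zero: "x i j = 0" if "x \<in> XS q k n'" "tot q k x = 0" "i \<in> {1..q}" "j \<in> {1..k i}" for x n' i j
      using that by (simp add: tot_def)
    show ?thesis
    proof (cases "n = (\<lambda>_. 0)")
      case True
      define x0 where "x0 = (\<lambda>i\<in>{1..q}. \<lambda>j\<in>{1..k i}. (0::nat))"
      have "XS q k n = {x0}"
      proof
        show "{x0} \<subseteq> XS q k n" using True by (simp add: x0_def XS_iff)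
        show "XS q k n \<subseteq> {x0}"
        proof
          fix x assume x: "x \<in> XS q k n"
          have "x i j = 0" if "i \<in> {1..q}" "j \<in> {1..k i}" for i j
          proof -
            have "(\<Sum>j\<in>{1..k i}. j * x i j) = 0" using x that True by (simp add: XS_iff)
            then show ?thesis using that by simp
          qed
          then show "x \<in> {x0}" using x
            by (auto simp: x0_def XS_iff fun_eq_iff extensional_def)
        qed
      qed
      moreover have "tot q k x0 = 0" "WW q k lam x0 = 1" by (simp_all add: x0_def tot_def WW_def)
      ultimately show ?thesis using p0 True by simp
    next
      case False
      have "tot q k x \<noteq> 0" if x: "x \<in> XS q k n" for x
      proof
        assume t0: "tot q k x = 0"
        have "n i = 0" for i
        proof (cases "i \<in> {1..q}")
          case True
          have "n i = (\<Sum>j\<in>{1..k i}. j * x i j)" using x True by (simp add: XS_iff)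
          also have "\<dots> = 0" using zero[OF x t0 True] by simp
          finally show ?thesis .
        next
          case False then show ?thesis using n by (simp add: NQ_def)
        qed
        then show False using \<open>n \<noteq> (\<lambda>_. 0)\<close> by auto
      qed
      then have "(\<Sum>x\<in>XS q k n. WW q k lam x * (if tot q k x = 0 then 1 else 0)) = 0"
        by (intro sum.neutral) (metis less_irrefl mult_zero_right)
      then show ?thesis using p0 False by simp
    qed
  qed
  have deriv: "((\<lambda>t. MGSFCP_prob q k lam mu n t) has_real_derivative
            (- (\<Sum>\<^sub>\<infinity>m\<in>NQ q. \<Sum>x\<in>PiE {1..q} (\<lambda>i. Omega (k i) (m i)).
                  (\<Sum>i\<in>{1..q}. \<Sum>j\<in>{1..k i}. lam i j) powr \<alpha> * Gamma (\<alpha> + 1)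
                  * MGSFCP_prob_diff q k lam mu n m t
                  * rGamma (\<alpha> - (\<Sum>i\<in>{1..q}. \<Sum>j\<in>{1..k i}. real (x i j)) + 1)
                  * (\<Prod>i\<in>{1..q}. \<Prod>j\<in>{1..k i}.
                       (- lam i j / (\<Sum>i\<in>{1..q}. \<Sum>j\<in>{1..k i}. lam i j)) ^ (x i j) / fact (x i j)))))
          (at t)" if t: "t > 0" for t
  proof -
    define LL where "LL = lamtot q k lam"
    have LL: "0 < LL" using L by (simp add: LL_def)
    define E where "E = (\<lambda>r. EE \<alpha> t r LL)"
    define c where "c = (\<lambda>b. ff \<alpha> b * (-1)^b * LL powr (\<alpha> - real b))"
    define DV where "DV = (\<Sum>x\<in>XS q k n. WW q k lam x * (- (\<Sum>b\<le>tot q k x. of_nat (tot q k x choose b) * ff \<alpha> b * (-1)^b * LL powr (\<alpha> - of_nat b) * EE \<alpha> t (tot q k x - b) LL)))"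
    have D: "((\<lambda>t. \<Sum>x\<in>XS q k n. WW q k lam x * EE \<alpha> t (tot q k x) LL) has_real_derivative DV) (at t)"
      unfolding DV_def by (intro DERIV_sum DERIV_cmult EE_tderiv LL)
    have D2: "((\<lambda>t. MGSFCP_prob q k lam mu n t) has_real_derivative DV) (at t)"
    proof (rule has_field_derivative_transform_within_open[OF D, of "{0<..}"])
      fix t' :: real assume "t' \<in> {0<..}"
      then show "(\<Sum>x\<in>XS q k n. WW q k lam x * EE \<alpha> t' (tot q k x) LL) = MGSFCP_prob q k lam mu n t'"
        using rep[OF _ n, of t'] by (simp add: LL_def)
    qed (use t in auto)
    have "DV = - (\<Sum>x\<in>XS q k n. WW q k lam x * (\<Sum>b\<le>tot q k x. real (tot q k x choose b) * c b * E (tot q k x - b)))"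
      unfolding DV_def c_def E_def by (simp add: sum_negf mult_ac)
    also have "\<dots> = - (\<Sum>m\<in>MS q n. \<Sum>y\<in>XS q k m. c (tot q k y) * WW q k lam y *
          (\<Sum>z\<in>XS q k (\<lambda>i. n i - m i). WW q k lam z * E (tot q k z)))"
      unfolding comb_main[OF n] ..
    also have "(\<Sum>m\<in>MS q n. \<Sum>y\<in>XS q k m. c (tot q k y) * WW q k lam y *
          (\<Sum>z\<in>XS q k (\<lambda>i. n i - m i). WW q k lam z * E (tot q k z)))
       = (\<Sum>\<^sub>\<infinity>m\<in>NQ q. \<Sum>x\<in>PiE {1..q} (\<lambda>i. Omega (k i) (m i)).
                  (\<Sum>i\<in>{1..q}. \<Sum>j\<in>{1..k i}. lam i j) powr \<alpha> * Gamma (\<alpha> + 1)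
                  * MGSFCP_prob_diff q k lam mu n m t
                  * rGamma (\<alpha> - (\<Sum>i\<in>{1..q}. \<Sum>j\<in>{1..k i}. real (x i j)) + 1)
                  * (\<Prod>i\<in>{1..q}. \<Prod>j\<in>{1..k i}.
                       (- lam i j / (\<Sum>i\<in>{1..q}. \<Sum>j\<in>{1..k i}. lam i j)) ^ (x i j) / fact (x i j)))"
      (is "_ = infsum ?F (NQ q)")
    proof -
      have summ: "(\<Sum>i\<in>{1..q}. \<Sum>j\<in>{1..k i}. lam i j) powr \<alpha> * Gamma (\<alpha> + 1) * P
                  * rGamma (\<alpha> - (\<Sum>i\<in>{1..q}. \<Sum>j\<in>{1..k i}. real (x i j)) + 1)
                  * (\<Prod>i\<in>{1..q}. \<Prod>j\<in>{1..k i}.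
                       (- lam i j / (\<Sum>i\<in>{1..q}. \<Sum>j\<in>{1..k i}. lam i j)) ^ (x i j) / fact (x i j))
             = c (tot q k x) * WW q k lam x * P" for x P
      proof -
        have r: "(\<Sum>i\<in>{1..q}. \<Sum>j\<in>{1..k i}. real (x i j)) = real (tot q k x)" by (simp add: tot_def)
        have "LL powr \<alpha> * Gamma (\<alpha> + 1) * P * rGamma (\<alpha> - real (tot q k x) + 1) * ((- 1 / LL) ^ tot q k x * WW q k lam x)
            = (Gamma (\<alpha> + 1) * rGamma (\<alpha> - real (tot q k x) + 1)) * (LL powr \<alpha> * (- 1 / LL) ^ tot q k x) * WW q k lam x * P"
          by (simp only: mult_ac)
        also have "\<dots> = c (tot q k x) * WW q k lam x * P"
          unfolding gamma_ff[OF alpha(1)] powr_term[OF LL] c_def by (simp only: mult_ac)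
        finally show ?thesis unfolding r Leq prod_term LL_def[symmetric] .
      qed
      have F0: "?F m = 0" if mm: "m \<in> NQ q - MS q n" for m
      proof -
        obtain i where "i \<in> {1..q}" "n i < m i" using mm by (auto simp: MS_def not_le)
        then have "MGSFCP_prob_diff q k lam mu n m t = 0" by (auto simp: MGSFCP_prob_diff_def)
        then show ?thesis by simp
      qed
      have "infsum ?F (NQ q) = infsum ?F (MS q n)"
        by (rule infsum_cong_neutral) (use F0 in \<open>auto simp: MS_def\<close>)
      also have "\<dots> = sum ?F (MS q n)" by (simp add: finite_MS)
      also have "\<dots> = (\<Sum>m\<in>MS q n. \<Sum>y\<in>XS q k m. c (tot q k y) * WW q k lam y *
          (\<Sum>z\<in>XS q k (\<lambda>i. n i - m i). WW q k lam z * E (tot q k z)))"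
      proof (rule sum.cong[OF refl])
        fix m assume m: "m \<in> MS q n"
        have nm: "(\<lambda>i. n i - m i) \<in> NQ q" using n by (simp add: NQ_def)
        have Pd: "MGSFCP_prob_diff q k lam mu n m t = (\<Sum>z\<in>XS q k (\<lambda>i. n i - m i). WW q k lam z * E (tot q k z))"
          using m rep[OF _ nm, of t] t by (auto simp: MGSFCP_prob_diff_def MS_def E_def LL_def not_less)
        show "?F m = (\<Sum>y\<in>XS q k m. c (tot q k y) * WW q k lam y *
          (\<Sum>z\<in>XS q k (\<lambda>i. n i - m i). WW q k lam z * E (tot q k z)))"
          unfolding XS_def Pd summ ..
      qed
      finally show ?thesis by simp
    qed
    finally have "DV = - infsum ?F (NQ q)" .
    then show ?thesis using D2 by simp
  qed
  show ?thesis using deriv init by blast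
qed

end
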